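(* Let $W\in\mathbb{Z}$ with $W\neq 0$ and let $\alpha\in\mathbb{R}$. Let $\Theta_1,\Theta_2$ be independent random variables, each uniformly distributed on $(-\pi,\pi]$, and set $\Phi_i:=\alpha+W\,\Theta_i \pmod{2\pi}$ for $i=1,2$. Then the weighted toroidal Kendall coefficient of the pair $(\Theta,\Phi)$, $$\tau_1=\frac{\mathbb{E}\big[\operatorname{wrap}_\pi(\Theta_2-\Theta_1)\,\mathrm{sign}\big(\operatorname{wrap}_\pi(\Phi_2-\Phi_1)\big)\big]}{\mathbb{E}\big[|\operatorname{wrap}_\pi(\Theta_2-\Theta_1)|\big]},$$ is well defined (the denominator is nonzero) and equals $$\tau_1=\frac{(-1)^{W+1}}{W}.$$ In particular $|\tau_1|=1/|W|$.
   Context: For $x\in\mathbb{R}$, the wrapped difference is $\operatorname{wrap}_\pi(x):=x-2\pi\left\lfloor\frac{x+\pi}{2\pi}\right\rfloor\in[-\pi,\pi)$; angles are interpreted modulo $2\pi$, so $\operatorname{wrap}_\pi(\Phi_2-\Phi_1)=\operatorname{wrap}_\pi(W(\Theta_2-\Theta_1))$. Here $\mathrm{sign}(y)=1$ for $y>0$, $-1$ for $y<0$, $0$ for $y=0$. In general, for a random pair $(\Theta,\Phi)$ of angles with i.i.d. copies $(\Theta_1,\Phi_1),(\Theta_2,\Phi_2)$, the weighted toroidal Kendall coefficient $\tau_1$ is defined by the displayed ratio, assuming the denominator is nonzero. *)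

theory Defs
  imports "HOL-Probability.Probability"
begin

definition wrap_pi :: "real \<Rightarrow> real" where
  "wrap_pi x = x - 2 * pi * of_int \<lfloor>(x + pi) / (2 * pi)\<rfloor>"

definition tau1 :: "'a measure \<Rightarrow> ('a \<Rightarrow> real) \<Rightarrow> ('a \<Rightarrow> real) \<Rightarrow> ('a \<Rightarrow> real) \<Rightarrow> ('a \<Rightarrow> real) \<Rightarrow> real" where
  "tau1 M Th1 Ph1 Th2 Ph2 =
     (\<integral>\<omega>. wrap_pi (Th2 \<omega> - Th1 \<omega>) * sgn (wrap_pi (Ph2 \<omega> - Ph1 \<omega>)) \<partial>M) /
     (\<integral>\<omega>. \<bar>wrap_pi (Th2 \<omega> - Th1 \<omega>)\<bar> \<partial>M)"

end

theory Submission imports Defs begin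

lemma wrap_meas[measurable]: "wrap_pi \<in> borel_measurable borel"
  unfolding wrap_pi_def by measurable

lemma wrap_periodic: "wrap_pi (x + 2*pi * of_int k) = wrap_pi x"
proof -
  have "(x + 2*pi * of_int k + pi) / (2*pi) = (x + pi)/(2*pi) + of_int k" by (simp add: field_simps)
  then show ?thesis unfolding wrap_pi_def by (simp add: algebra_simps)
qed

lemma wrap_id: "-pi \<le> x \<Longrightarrow> x < pi \<Longrightarrow> wrap_pi x = x"
proof -
  assume a: "-pi \<le> x" "x < pi"
  have "\<lfloor>(x + pi) / (2*pi)\<rfloor> = 0"
    using a by (simp add: floor_eq_iff field_simps)
  then show ?thesis unfolding wrap_pi_def by simp
qed

lemma wrap_range: "-pi \<le> wrap_pi x \<and> wrap_pi x < pi"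
proof -
  define n where "n = real_of_int \<lfloor>(x + pi) / (2*pi)\<rfloor>"
  have "n \<le> (x + pi) / (2*pi)" unfolding n_def by (rule of_int_floor_le)
  then have 1: "2*pi*n \<le> x + pi" by (simp add: field_simps)
  have "(x + pi) / (2*pi) < n + 1" unfolding n_def by (rule real_of_int_floor_add_one_gt)
  then have 2: "x + pi < 2*pi*(n+1)" by (simp add: field_simps)
  have "wrap_pi x = x - 2*pi*n" unfolding wrap_pi_def n_def by simp
  with 1 2 show ?thesis by (simp add: algebra_simps)
qed

lemma wrap_bound: "\<bar>wrap_pi x\<bar> \<le> pi"
  using wrap_range[of x] by auto

lemma wrap_sgn:
  fixes j :: int
  assumes "of_int j * pi < y" "y < (of_int j + 1) * pi"
  shows "sgn (wrap_pi y) = (if even j then 1 else -1)"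
proof (cases "even j")
  case True
  then obtain m where m: "j = 2*m" by blast
  have "\<lfloor>(y + pi) / (2*pi)\<rfloor> = m"
    using assms unfolding m by (simp add: floor_eq_iff field_simps)
  then have "wrap_pi y = y - 2*pi * of_int m" unfolding wrap_pi_def by simp
  moreover have "y - 2*pi * of_int m > 0" using assms unfolding m by (simp add: field_simps)
  ultimately show ?thesis using True by simp
next
  case False
  then obtain m where m: "j = 2*m+1" using oddE by blast
  have "\<lfloor>(y + pi) / (2*pi)\<rfloor> = m + 1"
    using assms unfolding m by (simp add: floor_eq_iff field_simps)
  then have "wrap_pi y = y - 2*pi * (of_int m + 1)" unfolding wrap_pi_def by simp
  moreover have "y - 2*pi * (of_int m+1) < 0" using assms unfolding m by (simp add: field_simps)
  ultimately show ?thesis using False by simp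
qed

lemma powi_m1: "(-1::real) powi k = (if even k then 1 else -1)"
  by (simp add: power_int_minus_left)


lemma unif_dens: "uniform_measure lborel {-pi<..pi} = density lborel (\<lambda>x. ennreal (indicator {-pi<..pi} x / (2*pi)))"
proof -
  have e: "emeasure lborel {-pi<..pi} = ennreal (2*pi)" by simp
  show ?thesis unfolding uniform_measure_def e
    using divide_ennreal[of 1 "2*pi"] pi_gt_zero
    by (intro density_cong) (auto simp: indicator_def)
qed

lemma unif_int:
  fixes f :: "real \<Rightarrow> real" assumes [measurable]: "f \<in> borel_measurable borel"
  shows "integral\<^sup>L (uniform_measure lborel {-pi<..pi}) f = (\<integral>x. indicator {-pi<..pi} x * f x \<partial>lborel) / (2*pi)"
proof -
  have "integral\<^sup>L (uniform_measure lborel {-pi<..pi}) f = (\<integral>x. (indicator {-pi<..pi} x / (2*pi)) * f x \<partial>lborel)"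
    unfolding unif_dens by (subst integral_density) auto
  also have "\<dots> = (\<integral>x. indicator {-pi<..pi} x * f x \<partial>lborel) / (2*pi)"
    by (simp add: divide_simps)
  finally show ?thesis .
qed

lemma ind_int:
  fixes g :: "real \<Rightarrow> real"
  assumes [measurable]: "g \<in> borel_measurable borel" and B: "\<And>x. \<bar>g x\<bar> \<le> B"
  shows "integrable lborel (\<lambda>x. indicator {a<..b} x * g x)"
proof (rule integrableI_bounded_set[where A="{a<..b}" and B=B])
  show "emeasure lborel {a<..b} < \<infinity>" by (cases "a \<le> b") auto
qed (auto simp: B indicator_def)

lemma shift_int:
  fixes g :: "real \<Rightarrow> real"
  assumes [measurable]: "g \<in> borel_measurable borel" and per: "\<And>x. g (x + 2*pi) = g x"
  shows "(\<integral>x. indicator {c<..d} x * g x \<partial>lborel) = (\<integral>x. indicator {c+2*pi<..d+2*pi} x * g x \<partial>lborel)"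
proof -
  have "(\<integral>x. indicator {c+2*pi<..d+2*pi} x * g x \<partial>lborel) =
      (\<integral>x. indicator {c+2*pi<..d+2*pi} (2*pi + x) * g (2*pi + x) \<partial>lborel)"
    using lborel_integral_real_affine[of 1 "\<lambda>x. indicator {c+2*pi<..d+2*pi} x * g x" "2*pi"] by simp
  also have "\<dots> = (\<integral>x. indicator {c<..d} x * g x \<partial>lborel)"
    using per by (intro Bochner_Integration.integral_cong) (auto simp: indicator_def add.commute)
  finally show ?thesis by simp
qed

lemma split_int:
  fixes g :: "real \<Rightarrow> real"
  assumes [measurable]: "g \<in> borel_measurable borel" and B: "\<And>x. \<bar>g x\<bar> \<le> B"
    and "a \<le> b" "b \<le> c"
  shows "(\<integral>x. indicator {a<..c} x * g x \<partial>lborel) = (\<integral>x. indicator {a<..b} x * g x \<partial>lborel) + (\<integral>x. indicator {b<..c} x * g x \<partial>lborel)"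
proof -
  have "(\<integral>x. indicator {a<..c} x * g x \<partial>lborel) = (\<integral>x. indicator {a<..b} x * g x + indicator {b<..c} x * g x \<partial>lborel)"
    using assms(3,4) by (intro Bochner_Integration.integral_cong) (auto simp: indicator_def)
  also have "\<dots> = (\<integral>x. indicator {a<..b} x * g x \<partial>lborel) + (\<integral>x. indicator {b<..c} x * g x \<partial>lborel)"
    by (intro Bochner_Integration.integral_add ind_int[OF assms(1) B])
  finally show ?thesis .
qed

lemma periodic_int:
  fixes g :: "real \<Rightarrow> real"
  assumes [measurable]: "g \<in> borel_measurable borel" and B: "\<And>x. \<bar>g x\<bar> \<le> B"
    and per: "\<And>x. g (x + 2*pi) = g x" and t: "-pi < t" "t \<le> pi"
  shows "(\<integral>y. indicator {-pi<..pi} y * g (y - t) \<partial>lborel) = (\<integral>y. indicator {-pi<..pi} y * g y \<partial>lborel)"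
proof -
  define a where "a = -pi - t"
  have "(\<integral>y. indicator {-pi<..pi} y * g (y - t) \<partial>lborel) =
      (\<integral>x. indicator {-pi<..pi} (t + x) * g ((t + x) - t) \<partial>lborel)"
    using lborel_integral_real_affine[of 1 "\<lambda>y. indicator {-pi<..pi} y * g (y - t)" t] by simp
  also have "\<dots> = (\<integral>x. indicator {a<..a+2*pi} x * g x \<partial>lborel)"
    unfolding a_def by (intro Bochner_Integration.integral_cong) (auto simp: indicator_def)
  also have "\<dots> = (\<integral>y. indicator {-pi<..pi} y * g y \<partial>lborel)"
  proof (cases "a \<le> -pi")
    case True
    have "(\<integral>x. indicator {a<..a+2*pi} x * g x \<partial>lborel) = (\<integral>x. indicator {a<..-pi} x * g x \<partial>lborel) + (\<integral>x. indicator {-pi<..a+2*pi} x * g x \<partial>lborel)"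
      using True t unfolding a_def by (intro split_int[OF _ B]) auto
    also have "(\<integral>x. indicator {a<..-pi} x * g x \<partial>lborel) = (\<integral>x. indicator {a+2*pi<..-pi+2*pi} x * g x \<partial>lborel)"
      using shift_int[OF assms(1) per, of a "-pi"] by simp
    also have "(\<integral>y. indicator {-pi<..pi} y * g y \<partial>lborel) = (\<integral>x. indicator {-pi<..a+2*pi} x * g x \<partial>lborel) + (\<integral>x. indicator {a+2*pi<..pi} x * g x \<partial>lborel)"
      using True t unfolding a_def by (intro split_int[OF _ B]) auto
    ultimately show ?thesis by simp
  next
    case False
    have "(\<integral>x. indicator {a<..a+2*pi} x * g x \<partial>lborel) = (\<integral>x. indicator {a<..pi} x * g x \<partial>lborel) + (\<integral>x. indicator {pi<..a+2*pi} x * g x \<partial>lborel)"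
      using False t unfolding a_def by (intro split_int[OF _ B]) auto
    also have "(\<integral>x. indicator {pi<..a+2*pi} x * g x \<partial>lborel) = (\<integral>x. indicator {-pi<..a} x * g x \<partial>lborel)"
      using shift_int[OF assms(1) per, of "-pi" a] by simp
    also have "(\<integral>y. indicator {-pi<..pi} y * g y \<partial>lborel) = (\<integral>x. indicator {-pi<..a} x * g x \<partial>lborel) + (\<integral>x. indicator {a<..pi} x * g x \<partial>lborel)"
      using False t unfolding a_def by (intro split_int[OF _ B]) auto
    ultimately show ?thesis by simp
  qed
  finally show ?thesis .
qed

lemma ftc_piece:
  fixes f F :: "real \<Rightarrow> real"
  assumes [measurable]: "f \<in> borel_measurable borel"
  assumes "a \<le> b" "\<And>x. a \<le> x \<Longrightarrow> x \<le> b \<Longrightarrow> DERIV F x :> f x"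
    "\<And>x. a \<le> x \<Longrightarrow> x \<le> b \<Longrightarrow> isCont f x"
  shows "(\<integral>x. indicator {a<..b} x * f x \<partial>lborel) = F b - F a"
proof -
  have "(\<integral>x. indicator {a<..b} x * f x \<partial>lborel) = (\<integral>x. f x * indicator {a..b} x \<partial>lborel)"
    by (intro integral_cong_AE) (auto intro!: eventually_mono[OF AE_lborel_singleton[of a]] simp: indicator_def)
  also have "\<dots> = F b - F a" by (rule integral_FTC_Icc_real[OF assms(2-4)])
  finally show ?thesis .
qed


lemma den1: "(\<integral>y. indicator {-pi<..pi} y * \<bar>wrap_pi y\<bar> \<partial>lborel) = pi^2"
proof -
  have m: "(\<lambda>y. \<bar>wrap_pi y\<bar>) \<in> borel_measurable borel" by measurable
  have "(\<integral>y. indicator {-pi<..pi} y * \<bar>wrap_pi y\<bar> \<partial>lborel) =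
     (\<integral>y. indicator {-pi<..0} y * \<bar>wrap_pi y\<bar> \<partial>lborel) + (\<integral>y. indicator {0<..pi} y * \<bar>wrap_pi y\<bar> \<partial>lborel)"
    by (rule split_int[OF m, of pi]) (auto simp: wrap_bound)
  also have "(\<integral>y. indicator {-pi<..0} y * \<bar>wrap_pi y\<bar> \<partial>lborel) = (\<integral>y. indicator {-pi<..0} y * (- y) \<partial>lborel)"
    by (intro Bochner_Integration.integral_cong) (auto simp: indicator_def wrap_id)
  also have "\<dots> = (-(0^2/2)) - (-((-pi)^2/2))"
    by (rule ftc_piece) (auto intro!: derivative_eq_intros)
  also have "(\<integral>y. indicator {0<..pi} y * \<bar>wrap_pi y\<bar> \<partial>lborel) = (\<integral>y. indicator {0<..pi} y * y \<partial>lborel)"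
    by (intro integral_cong_AE) (auto intro!: eventually_mono[OF AE_lborel_singleton[of pi]] simp: indicator_def wrap_id)
  also have "\<dots> = pi^2/2 - 0^2/2"
    by (rule ftc_piece) (auto intro!: derivative_eq_intros)
  finally show ?thesis by (simp add: power2_eq_square)
qed

lemma alt_sum1: "(\<Sum>k<2*n. (-1::real)^k * (2*real k + 1)) = -2 * real n"
  by (induction n) (auto simp: algebra_simps)

lemma alt_sum0: "(\<Sum>k<2*n. (-1::real)^k) = 0"
  by (induction n) auto

lemma alt_sum: "(\<Sum>k<2*n. (-1::real)^k * (2*real k + 1 - 2 * real n)) = -2 * real n"
proof -
  have "(\<Sum>k<2*n. (-1::real)^k * (2*real k + 1 - 2 * real n)) =
     (\<Sum>k<2*n. (-1::real)^k * (2*real k + 1)) - 2 * real n * (\<Sum>k<2*n. (-1::real)^k)"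
    by (simp add: algebra_simps sum_subtractf sum_distrib_left)
  then show ?thesis by (simp add: alt_sum1 alt_sum0)
qed


lemma piece_sgn:
  fixes W :: int and V k :: nat and y :: real
  assumes W: "W \<noteq> 0" and V: "V = nat \<bar>W\<bar>"
    and y1: "-pi + real k * (pi / real V) < y" and y2: "y < -pi + real (Suc k) * (pi / real V)"
  shows "sgn (wrap_pi (of_int W * y)) = sgn (of_int W) * (-1)^(k+V)"
proof -
  have Vp: "real V > 0" using V W by simp
  have y1': "(real k - real V) * pi < real V * y" using y1 Vp by (simp add: field_simps)
  have y2': "real V * y < (real k - real V + 1) * pi" using y2 Vp by (simp add: field_simps)
  show ?thesis
  proof (cases "W > 0")
    case True
    then have WV: "real_of_int W = real V" using V by simp
    have "sgn (wrap_pi (of_int W * y)) = (if even (int k - int V) then 1 else -1)"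
      by (rule wrap_sgn) (use y1' y2' WV in auto)
    moreover have "even (int k - int V) \<longleftrightarrow> even (k + V)"
      by (metis even_add even_diff even_of_nat)
    ultimately show ?thesis using True by (simp add: minus_one_power_iff)
  next
    case False
    then have WV: "real_of_int W = - real V" using V W by simp
    have "sgn (wrap_pi (of_int W * y)) = (if even (int V - int k - 1) then 1 else -1)"
      by (rule wrap_sgn) (use y1' y2' WV in \<open>auto simp: algebra_simps\<close>)
    moreover have "even (int V - int k - 1) \<longleftrightarrow> odd (k + V)"
      by (metis even_add even_diff even_of_nat odd_one)
    ultimately show ?thesis using False W by (simp add: minus_one_power_iff)
  qed
qed


lemma num1:
  fixes W :: int
  assumes W: "W \<noteq> 0"
  shows "(\<integral>y. indicator {-pi<..pi} y * (wrap_pi y * sgn (wrap_pi (of_int W * y))) \<partial>lborel)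
     = - ((-1)^(nat \<bar>W\<bar>)) * sgn (of_int W) * pi^2 / real (nat \<bar>W\<bar>)"
proof -
  define V where "V = nat \<bar>W\<bar>"
  have Vp: "real V > 0" using V_def W by simp
  define d where "d = pi / real V"
  have piV: "pi = real V * d" using Vp unfolding d_def by simp
  have dp: "d > 0" unfolding d_def using Vp by simp
  define x where "x k = -pi + real k * d" for k :: nat
  define g where "g y = wrap_pi y * sgn (wrap_pi (of_int W * y))" for y
  define c where "c k = sgn (real_of_int W) * (-1)^(k+V)" for k
  have gm[measurable]: "g \<in> borel_measurable borel" unfolding g_def by measurable
  have gb: "\<bar>g y\<bar> \<le> pi" for y
  proof -
    have "\<bar>g y\<bar> = \<bar>wrap_pi y\<bar> * \<bar>sgn (wrap_pi (of_int W * y))\<bar>" unfolding g_def by (simp add: abs_mult)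
    also have "\<dots> \<le> \<bar>wrap_pi y\<bar> * 1" by (intro mult_left_mono) (auto simp: abs_sgn_eq)
    finally show ?thesis using wrap_bound[of y] by simp
  qed
  have xmono: "x i \<le> x j" if "i \<le> j" for i j
    unfolding x_def using that dp by (simp add: mult_right_mono)
  have piece: "(\<integral>y. indicator {x k<..x (Suc k)} y * g y \<partial>lborel) = c k * ((x (Suc k))^2 - (x k)^2) / 2"
    if k: "k < 2*V" for k
  proof -
    have xk: "x k \<ge> -pi" unfolding x_def using dp by simp
    have xk1: "x (Suc k) \<le> pi"
    proof -
      have "real (Suc k) * d \<le> real (2*V) * d" using k dp by (intro mult_right_mono) auto
      then show ?thesis unfolding x_def using piV by simp
    qed
    have "(\<integral>y. indicator {x k<..x (Suc k)} y * g y \<partial>lborel) = (\<integral>y. indicator {x k<..x (Suc k)} y * (c k * y) \<partial>lborel)"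
    proof (intro integral_cong_AE)
      show "AE y in lborel. indicator {x k<..x (Suc k)} y * g y = indicator {x k<..x (Suc k)} y * (c k * y)"
      proof (rule eventually_mono[OF AE_lborel_singleton[of "x (Suc k)"]])
        fix y assume ne: "y \<noteq> x (Suc k)"
        show "indicator {x k<..x (Suc k)} y * g y = indicator {x k<..x (Suc k)} y * (c k * y)"
        proof (cases "y \<in> {x k<..x (Suc k)}")
          case True
          then have y1: "x k < y" and y2: "y < x (Suc k)" using ne by auto
          have "wrap_pi y = y" using y1 y2 xk xk1 by (intro wrap_id) auto
          moreover have "sgn (wrap_pi (of_int W * y)) = c k"
            unfolding c_def by (rule piece_sgn[OF W V_def]) (use y1 y2 in \<open>auto simp: x_def d_def\<close>)
          ultimately show ?thesis unfolding g_def by simp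
        qed simp
      qed
    qed auto
    also have "\<dots> = c k * (x (Suc k))^2 / 2 - c k * (x k)^2 / 2"
      by (rule ftc_piece) (auto intro!: derivative_eq_intros xmono)
    finally show ?thesis by (simp add: algebra_simps)
  qed
  have partial: "(\<integral>y. indicator {x 0<..x n} y * g y \<partial>lborel) = (\<Sum>k<n. c k * ((x (Suc k))^2 - (x k)^2) / 2)"
    if "n \<le> 2*V" for n
    using that
  proof (induction n)
    case 0
    then show ?case by simp
  next
    case (Suc n)
    have "(\<integral>y. indicator {x 0<..x (Suc n)} y * g y \<partial>lborel) =
       (\<integral>y. indicator {x 0<..x n} y * g y \<partial>lborel) + (\<integral>y. indicator {x n<..x (Suc n)} y * g y \<partial>lborel)"
      by (rule split_int[OF gm gb]) (auto intro: xmono)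
    then show ?case using Suc piece[of n] by simp
  qed
  have x0: "x 0 = -pi" and x2V: "x (2*V) = pi" unfolding x_def using piV by auto
  have "(\<integral>y. indicator {-pi<..pi} y * g y \<partial>lborel) = (\<Sum>k<2*V. c k * ((x (Suc k))^2 - (x k)^2) / 2)"
    using partial[of "2*V"] x0 x2V by simp
  also have "\<dots> = (\<Sum>k<2*V. (sgn (real_of_int W) * (-1)^V * d^2 / 2) * ((-1::real)^k * (2*real k + 1 - 2 * real V)))"
  proof (rule sum.cong)
    fix k assume "k \<in> {..<2*V}"
    have eq: "(x (Suc k))^2 - (x k)^2 = d^2 * (2*real k + 1 - 2 * real V)"
      unfolding x_def piV by (simp add: power2_eq_square algebra_simps)
    then show "c k * ((x (Suc k))^2 - (x k)^2) / 2 = (sgn (real_of_int W) * (-1)^V * d^2 / 2) * ((-1::real)^k * (2*real k + 1 - 2 * real V))"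
      unfolding c_def eq by (simp add: power_add)
  qed simp
  also have "\<dots> = (sgn (real_of_int W) * (-1)^V * d^2 / 2) * (-2 * real V)"
    by (subst sum_distrib_left[symmetric]) (simp only: alt_sum)
  also have "\<dots> = - ((-1)^V) * sgn (of_int W) * pi^2 / real V"
    unfolding piV using Vp by (simp add: power2_eq_square field_simps)
  finally show ?thesis unfolding g_def V_def .
qed


lemma expect_periodic:
  fixes M :: "'a measure" and Th1 Th2 :: "'a \<Rightarrow> real" and g :: "real \<Rightarrow> real"
  assumes "prob_space M"
    and ind: "prob_space.indep_var M borel Th1 borel Th2"
    and [measurable]: "Th1 \<in> borel_measurable M" and [measurable]: "Th2 \<in> borel_measurable M"
    and d1: "distr M borel Th1 = uniform_measure lborel {-pi<..pi}"
    and d2: "distr M borel Th2 = uniform_measure lborel {-pi<..pi}"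
    and gm[measurable]: "g \<in> borel_measurable borel" and gb: "\<And>x. \<bar>g x\<bar> \<le> B"
    and per: "\<And>x. g (x + 2*pi) = g x"
  shows "(\<integral>\<omega>. g (Th2 \<omega> - Th1 \<omega>) \<partial>M) = (\<integral>y. indicator {-pi<..pi} y * g y \<partial>lborel) / (2*pi)"
proof -
  interpret prob_space M by fact
  define U where "U = uniform_measure lborel {-pi<..pi}"
  have "prob_space U" unfolding U_def by (rule prob_space_uniform_measure) auto
  then interpret U: prob_space U .
  interpret P: pair_prob_space U U by unfold_locales
  have sU[measurable_cong]: "sets U = sets borel" unfolding U_def by simp
  have joint: "distr M (borel \<Otimes>\<^sub>M borel) (\<lambda>\<omega>. (Th1 \<omega>, Th2 \<omega>)) = U \<Otimes>\<^sub>M U"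
    using ind unfolding indep_var_distribution_eq d1 d2 U_def by simp
  define G where "G p = g (snd p - fst p)" for p :: "real \<times> real"
  have Gm[measurable]: "G \<in> borel_measurable (borel \<Otimes>\<^sub>M borel)" unfolding G_def by measurable
  have GmU: "G \<in> borel_measurable (U \<Otimes>\<^sub>M U)"
    using Gm by (simp add: measurable_cong_sets[OF sets_pair_measure_cong[OF sU sU] refl])
  have C: "(\<integral>y. g (y - x) \<partial>U) = (\<integral>y. indicator {-pi<..pi} y * g y \<partial>lborel) / (2*pi)"
    if "x \<in> {-pi<..pi}" for x
  proof -
    have "(\<integral>y. g (y - x) \<partial>U) = (\<integral>y. indicator {-pi<..pi} y * g (y - x) \<partial>lborel) / (2*pi)"
      unfolding U_def by (rule unif_int) measurable
    also have "\<dots> = (\<integral>y. indicator {-pi<..pi} y * g y \<partial>lborel) / (2*pi)"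
      using that by (subst periodic_int[OF gm gb per]) auto
    finally show ?thesis .
  qed
  have "(\<integral>\<omega>. g (Th2 \<omega> - Th1 \<omega>) \<partial>M) = (\<integral>p. G p \<partial>distr M (borel \<Otimes>\<^sub>M borel) (\<lambda>\<omega>. (Th1 \<omega>, Th2 \<omega>)))"
    by (subst integral_distr) (auto simp: G_def)
  also have "\<dots> = (\<integral>p. G p \<partial>(U \<Otimes>\<^sub>M U))" unfolding joint ..
  also have "\<dots> = (\<integral>x. (\<integral>y. G (x, y) \<partial>U) \<partial>U)"
  proof (rule P.integral_fst'[symmetric])
    show "integrable (U \<Otimes>\<^sub>M U) G"
      by (rule P.P.integrable_const_bound[where B=B]) (auto simp: G_def gb GmU)
  qed
  also have "\<dots> = (\<integral>x. (\<integral>y. indicator {-pi<..pi} y * g y \<partial>lborel) / (2*pi) \<partial>U)"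
  proof (rule integral_cong_AE)
    show "AE x in U. (\<integral>y. G (x, y) \<partial>U) = (\<integral>y. indicator {-pi<..pi} y * g y \<partial>lborel) / (2*pi)"
      unfolding U_def by (rule AE_uniform_measureI) (auto simp: G_def C[unfolded U_def])
  qed (auto simp: GmU)
  also have "\<dots> = (\<integral>y. indicator {-pi<..pi} y * g y \<partial>lborel) / (2*pi)" by (simp add: U.prob_space)
  finally show ?thesis .
qed


lemma final_val:
  fixes W :: int assumes W: "W \<noteq> 0"
  shows "(- ((-1)^(nat \<bar>W\<bar>)) * sgn (of_int W) * pi^2 / real (nat \<bar>W\<bar>)) / (2*pi) / (pi^2 / (2*pi))
     = (-1::real) powi (W + 1) / of_int W"
proof -
  have ev: "even (nat \<bar>W\<bar>) \<longleftrightarrow> even W" by (simp add: even_nat_iff)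
  have p: "(-1::real)^(nat \<bar>W\<bar>) = (if even W then 1 else -1)" using ev by (simp add: minus_one_power_iff)
  have "(- ((-1)^(nat \<bar>W\<bar>)) * sgn (of_int W) * pi^2 / real (nat \<bar>W\<bar>)) / (2*pi) / (pi^2 / (2*pi))
      = - ((-1::real)^(nat \<bar>W\<bar>)) * (1 / of_int W)"
    using W by (cases "W > 0") (auto simp: field_simps power2_eq_square)
  also have "\<dots> = (-1::real) powi (W + 1) / of_int W"
    by (simp add: p powi_m1)
  finally show ?thesis .
qed

theorem theorem1:
  fixes M :: "'a measure" and Th1 Th2 :: "'a \<Rightarrow> real" and W :: int and \<alpha> :: real
  assumes "prob_space M"
    and "W \<noteq> 0"
    and "prob_space.indep_var M borel Th1 borel Th2"
    and "Th1 \<in> borel_measurable M" and "Th2 \<in> borel_measurable M"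
    and "distr M borel Th1 = uniform_measure lborel {-pi<..pi}"
    and "distr M borel Th2 = uniform_measure lborel {-pi<..pi}"
  shows "(\<integral>\<omega>. \<bar>wrap_pi (Th2 \<omega> - Th1 \<omega>)\<bar> \<partial>M) \<noteq> 0
       \<and> tau1 M Th1 (\<lambda>\<omega>. \<alpha> + of_int W * Th1 \<omega>) Th2 (\<lambda>\<omega>. \<alpha> + of_int W * Th2 \<omega>)
           = (-1) powi (W + 1) / of_int W
       \<and> \<bar>tau1 M Th1 (\<lambda>\<omega>. \<alpha> + of_int W * Th1 \<omega>) Th2 (\<lambda>\<omega>. \<alpha> + of_int W * Th2 \<omega>)\<bar>
           = 1 / \<bar>of_int W\<bar>"
proof -
  have per1: "wrap_pi (x + 2*pi) = wrap_pi x" for x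
    using wrap_periodic[of x 1] by simp
  have den: "(\<integral>\<omega>. \<bar>wrap_pi (Th2 \<omega> - Th1 \<omega>)\<bar> \<partial>M) = pi^2 / (2*pi)"
    using expect_periodic[OF assms(1,3,4,5,6,7), of "\<lambda>x. \<bar>wrap_pi x\<bar>" pi]
    by (simp add: wrap_bound per1 den1)
  define g where "g x = wrap_pi x * sgn (wrap_pi (of_int W * x))" for x
  have gb: "\<bar>g x\<bar> \<le> pi" for x
  proof -
    have "\<bar>g x\<bar> = \<bar>wrap_pi x\<bar> * \<bar>sgn (wrap_pi (of_int W * x))\<bar>" unfolding g_def by (simp add: abs_mult)
    also have "\<dots> \<le> \<bar>wrap_pi x\<bar> * 1" by (intro mult_left_mono) (auto simp: abs_sgn_eq)
    finally show ?thesis using wrap_bound[of x] by simp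
  qed
  have gper: "g (x + 2*pi) = g x" for x
  proof -
    have "wrap_pi (of_int W * (x + 2*pi)) = wrap_pi (of_int W * x + 2 * pi * of_int W)"
      by (simp add: algebra_simps)
    then show ?thesis unfolding g_def by (simp add: per1 wrap_periodic)
  qed
  have gm: "g \<in> borel_measurable borel" unfolding g_def by measurable
  have num: "(\<integral>\<omega>. wrap_pi (Th2 \<omega> - Th1 \<omega>) * sgn (wrap_pi ((\<alpha> + of_int W * Th2 \<omega>) - (\<alpha> + of_int W * Th1 \<omega>))) \<partial>M)
      = (- ((-1)^(nat \<bar>W\<bar>)) * sgn (of_int W) * pi^2 / real (nat \<bar>W\<bar>)) / (2*pi)"
  proof -
    have "(\<integral>\<omega>. wrap_pi (Th2 \<omega> - Th1 \<omega>) * sgn (wrap_pi ((\<alpha> + of_int W * Th2 \<omega>) - (\<alpha> + of_int W * Th1 \<omega>))) \<partial>M)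
        = (\<integral>\<omega>. g (Th2 \<omega> - Th1 \<omega>) \<partial>M)"
      unfolding g_def by (simp add: algebra_simps)
    also have "\<dots> = (\<integral>y. indicator {-pi<..pi} y * g y \<partial>lborel) / (2*pi)"
      by (rule expect_periodic[OF assms(1,3,4,5,6,7) gm gb gper])
    also have "\<dots> = (- ((-1)^(nat \<bar>W\<bar>)) * sgn (of_int W) * pi^2 / real (nat \<bar>W\<bar>)) / (2*pi)"
      unfolding g_def using num1[OF assms(2)] by simp
    finally show ?thesis .
  qed
  have t: "tau1 M Th1 (\<lambda>\<omega>. \<alpha> + of_int W * Th1 \<omega>) Th2 (\<lambda>\<omega>. \<alpha> + of_int W * Th2 \<omega>)
           = (-1) powi (W + 1) / of_int W"
    unfolding tau1_def num den by (rule final_val[OF assms(2)])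
  have a: "\<bar>(-1::real) powi (W + 1)\<bar> = 1" by (simp add: powi_m1)
  show ?thesis
    using t den a by (simp add: abs_divide)
qed

end
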